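(* There is a unique family of elements $\chi_\lambda\in\mathbb{Z}[(1-[-\alpha])^{-1}]_{\alpha\in\Delta}$, indexed by $\lambda\in\bigcup_{i\in I}W\cdot\omega_i$, such that $\chi_{\omega_i}=1$ for all $i\in I$ and, for all $w\in W$ and $i\in I$ with $l(ws_i)=l(w)+1$, $$\chi_{ws_i(\omega_i)}\,\chi_{w(\omega_i)}=(1-[-w(\alpha_i)])^{-1}\prod_{j\neq i}\chi_{w(\omega_j)}^{-C_{i,j}}.$$
   Context: $\mathfrak{g}$ simple with index set $I$, Cartan matrix $C$, weight lattice $P$, fundamental weights $\omega_i$, simple roots $\alpha_i$, root system $\Delta$, Weyl group $W$ with length function $l$. The $W$-orbits $W\cdot\omega_i$ ($i\in I$) are pairwise disjoint, so $\lambda\in\bigcup_iW\omega_i$ determines $i$. $[\mu]$ ($\mu\in P$) denotes the basis element of the group ring $\mathbb{Z}[P]$, with $[\mu][\nu]=[\mu+\nu]$; $\mathbb{Z}[(1-[-\alpha])^{-1}]_{\alpha\in\Delta}$ is the subring of the fraction field of $\mathbb{Z}[P]$ generated by the $(1-[-\alpha])^{-1}$ (note $(1-[-\alpha])\in\mathbb{Z}[P]$ as well since $\mathbb{Z}[P]$... the ring is taken as generated over $\mathbb{Z}$ by these inverses and inside the fraction field). *)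

theory Defs
  imports Complex_Main "HOL-Library.Poly_Mapping" "HOL-Computational_Algebra.Fraction_Field"
begin

(* Index set I: a finite type 'i (the linorder is only used to obtain the
   idom instance of the group ring; every finite set admits one).
   Weight lattice P = Z-span of the fundamental weights, coordinates w.r.t.
   the fundamental weights: 'i \<Rightarrow>\<^sub>0 int.  Group ring Z[P]: (P \<Rightarrow>\<^sub>0 int). *)

type_synonym 'i weight = "'i \<Rightarrow>\<^sub>0 int"
type_synonym 'i grpring = "'i weight \<Rightarrow>\<^sub>0 int"

(* C is the Cartan matrix of a (finite-dimensional complex) simple Lie algebra:
   an indecomposable generalized Cartan matrix of finite type
   (symmetrizable with positive definite symmetrization). *)
definition cartan_simple :: "('i::finite \<Rightarrow> 'i \<Rightarrow> int) \<Rightarrow> bool" where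
  "cartan_simple C \<longleftrightarrow>
     (\<forall>i. C i i = 2) \<and> (\<forall>i j. i \<noteq> j \<longrightarrow> C i j \<le> 0) \<and>
     (\<forall>i j. C i j = 0 \<longleftrightarrow> C j i = 0) \<and>
     (\<exists>e::'i \<Rightarrow> real. (\<forall>i. e i > 0) \<and>
        (\<forall>i j. of_int (C i j) * e j = of_int (C j i) * e i) \<and>
        (\<forall>x::'i \<Rightarrow> real. (\<exists>i. x i \<noteq> 0) \<longrightarrow>
            (\<Sum>i\<in>UNIV. \<Sum>j\<in>UNIV. x i * of_int (C i j) * e j * x j) > 0)) \<and>
     (\<forall>J::'i set. J \<noteq> {} \<and> J \<noteq> UNIV \<longrightarrow> (\<exists>i\<in>J. \<exists>j\<in>-J. C i j \<noteq> 0))"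

definition fw :: "'i \<Rightarrow> 'i weight" where
  "fw i = Poly_Mapping.single i 1"

(* simple root \<alpha>_i = \<Sum>_j C_{i,j} \<omega>_j, i.e. C_{i,j} = <\<alpha>_i, \<alpha>_j^\<or>> *)
definition sr :: "('i::finite \<Rightarrow> 'i \<Rightarrow> int) \<Rightarrow> 'i \<Rightarrow> 'i weight" where
  "sr C i = (\<Sum>j\<in>UNIV. Poly_Mapping.single j (C i j))"

(* simple reflection s_i(\<lambda>) = \<lambda> - <\<lambda>, \<alpha>_i^\<or>> \<alpha>_i, where <\<lambda>, \<alpha>_i^\<or>> = Poly_Mapping.lookup \<lambda> i *)
definition srefl :: "('i::finite \<Rightarrow> 'i \<Rightarrow> int) \<Rightarrow> 'i \<Rightarrow> 'i weight \<Rightarrow> 'i weight" where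
  "srefl C i lam = lam - (\<Sum>j\<in>UNIV. Poly_Mapping.single j (Poly_Mapping.lookup lam i * C i j))"

definition wprod :: "('i::finite \<Rightarrow> 'i \<Rightarrow> int) \<Rightarrow> 'i list \<Rightarrow> 'i weight \<Rightarrow> 'i weight" where
  "wprod C is = foldr (\<lambda>i f. srefl C i \<circ> f) is id"

definition weyl :: "('i::finite \<Rightarrow> 'i \<Rightarrow> int) \<Rightarrow> ('i weight \<Rightarrow> 'i weight) set" where
  "weyl C = range (wprod C)"

definition wlen :: "('i::finite \<Rightarrow> 'i \<Rightarrow> int) \<Rightarrow> ('i weight \<Rightarrow> 'i weight) \<Rightarrow> nat" where
  "wlen C w = (LEAST k. \<exists>is. length is = k \<and> wprod C is = w)"

definition roots :: "('i::finite \<Rightarrow> 'i \<Rightarrow> int) \<Rightarrow> 'i weight set" where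
  "roots C = {w (sr C i) | w i. w \<in> weyl C}"

definition wt_orbits :: "('i::finite \<Rightarrow> 'i \<Rightarrow> int) \<Rightarrow> 'i weight set" where
  "wt_orbits C = {w (fw i) | w i. w \<in> weyl C}"

definition gb :: "'i weight \<Rightarrow> 'i grpring" where
  "gb \<mu> = Poly_Mapping.single \<mu> 1"

definition emb :: "'a::idom \<Rightarrow> 'a fract" where
  "emb x = Fract x 1"

inductive_set gen_subring :: "'a::comm_ring_1 set \<Rightarrow> 'a set" for S where
  gen: "x \<in> S \<Longrightarrow> x \<in> gen_subring S"
| one: "1 \<in> gen_subring S"
| add: "x \<in> gen_subring S \<Longrightarrow> y \<in> gen_subring S \<Longrightarrow> x + y \<in> gen_subring S"
| neg: "x \<in> gen_subring S \<Longrightarrow> - x \<in> gen_subring S"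
| mult: "x \<in> gen_subring S \<Longrightarrow> y \<in> gen_subring S \<Longrightarrow> x * y \<in> gen_subring S"

definition denom_ring :: "('i::{finite,linorder} \<Rightarrow> 'i \<Rightarrow> int) \<Rightarrow> ('i grpring) fract set" where
  "denom_ring C = gen_subring {inverse (emb (1 - gb (- a))) | a. a \<in> roots C}"

definition chi_family :: "('i::{finite,linorder} \<Rightarrow> 'i \<Rightarrow> int) \<Rightarrow> ('i weight \<Rightarrow> ('i grpring) fract) \<Rightarrow> bool" where
  "chi_family C \<chi> \<longleftrightarrow>
     (\<forall>lam\<in>wt_orbits C. \<chi> lam \<in> denom_ring C) \<and>
     (\<forall>i. \<chi> (fw i) = 1) \<and>
     (\<forall>w\<in>weyl C. \<forall>i. wlen C (w \<circ> srefl C i) = wlen C w + 1 \<longrightarrow>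
        \<chi> ((w \<circ> srefl C i) (fw i)) * \<chi> (w (fw i)) =
          inverse (emb (1 - gb (- w (sr C i)))) *
          (\<Prod>j\<in>UNIV - {i}. \<chi> (w (fw j)) powi (- C i j)))"

end

theory Submission
  imports Defs
begin

abbreviation lk where "lk \<equiv> Poly_Mapping.lookup"

lemma lookup_sr: "lk (sr C i) k = C i k"
  unfolding sr_def Poly_Mapping.lookup_sum by (simp add: Poly_Mapping.lookup_single when_def)

lemma lookup_srefl: "lk (srefl C i lam) k = lk lam k - lk lam i * C i k"
  unfolding srefl_def Poly_Mapping.lookup_minus Poly_Mapping.lookup_sum by (simp add: Poly_Mapping.lookup_single when_def)

lemma lookup_fw: "lk (fw i) k = (if i = k then 1 else 0)"
  unfolding fw_def by (simp add: Poly_Mapping.lookup_single when_def)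


definition dl :: "'i \<Rightarrow> 'i \<Rightarrow> int" where "dl i = (\<lambda>k. if k = i then 1 else 0)"
definition cs :: "('i::finite \<Rightarrow> 'i \<Rightarrow> int) \<Rightarrow> 'i \<Rightarrow> ('i \<Rightarrow> int) \<Rightarrow> ('i \<Rightarrow> int)" where
  "cs C i h = (\<lambda>k. if k = i then h i - (\<Sum>l\<in>UNIV. C i l * h l) else h k)"
definition cw :: "('i::finite \<Rightarrow> 'i \<Rightarrow> int) \<Rightarrow> 'i list \<Rightarrow> ('i \<Rightarrow> int) \<Rightarrow> ('i \<Rightarrow> int)" where
  "cw C is = foldr (\<lambda>i f. cs C i \<circ> f) is id"
definition pr :: "'i::finite weight \<Rightarrow> ('i \<Rightarrow> int) \<Rightarrow> int" where
  "pr lam h = (\<Sum>k\<in>UNIV. lk lam k * h k)"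
definition nonneg :: "('i \<Rightarrow> int) \<Rightarrow> bool" where "nonneg h \<longleftrightarrow> (\<forall>k. 0 \<le> h k)"
definition nonpos :: "('i \<Rightarrow> int) \<Rightarrow> bool" where "nonpos h \<longleftrightarrow> (\<forall>k. h k \<le> 0)"

lemma wprod_Nil[simp]: "wprod C [] = id" by (simp add: wprod_def)
lemma wprod_Cons[simp]: "wprod C (i # is) = srefl C i \<circ> wprod C is" by (simp add: wprod_def)
lemma wprod_append[simp]: "wprod C (is @ js) = wprod C is \<circ> wprod C js"
  by (induction "is") auto
lemma cw_Nil[simp]: "cw C [] = id" by (simp add: cw_def)
lemma cw_Cons[simp]: "cw C (i # is) = cs C i \<circ> cw C is" by (simp add: cw_def)
lemma cw_append[simp]: "cw C (is @ js) = cw C is \<circ> cw C js"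
  by (induction "is") auto

lemma pr_fw[simp]: "pr (fw j) h = h j"
proof -
  have "\<And>k. lk (fw j) k * h k = (if k = j then h j else 0)" by (auto simp: lookup_fw)
  then show ?thesis unfolding pr_def by simp
qed

lemma sum_dl[simp]: "(\<Sum>l\<in>(UNIV::'i::finite set). f l * dl i l) = (f i :: int)"
proof -
  have "(\<Sum>l\<in>UNIV. f l * dl i l) = (\<Sum>l\<in>UNIV. if l = i then f i else 0)"
    by (rule sum.cong) (auto simp: dl_def)
  also have "\<dots> = f i" by (simp add: sum.delta)
  finally show ?thesis .
qed

lemma lookup_eqI: "(\<And>k. lk f k = lk g k) \<Longrightarrow> f = g"
  by (rule poly_mapping_eqI)

lemma srefl_fw_other: "j \<noteq> k \<Longrightarrow> srefl C j (fw k) = fw k"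
  by (rule lookup_eqI) (simp add: lookup_srefl lookup_fw)

locale cm =
  fixes C :: "'i::{finite,linorder} \<Rightarrow> 'i \<Rightarrow> int"
  assumes diag[simp]: "C i i = 2"
begin

lemma srefl_srefl[simp]: "srefl C i (srefl C i lam) = lam"
  by (rule lookup_eqI) (simp add: lookup_srefl algebra_simps)

lemma srefl_comp[simp]: "srefl C i \<circ> srefl C i = id"
  by auto

lemma cs_cs[simp]: "cs C i (cs C i h) = h"
proof
  fix k
  have "(\<Sum>l\<in>UNIV. C i l * cs C i h l) = (\<Sum>l\<in>UNIV. C i l * h l - C i l * (\<Sum>l\<in>UNIV. C i l * h l) * dl i l)"
    by (rule sum.cong) (auto simp: cs_def dl_def algebra_simps)
  also have "\<dots> = - (\<Sum>l\<in>UNIV. C i l * h l)"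
    by (simp add: sum_subtractf)
  finally show "cs C i (cs C i h) k = h k"
    by (simp add: cs_def)
qed

lemma cs_comp[simp]: "cs C i \<circ> cs C i = id" by auto

lemma wprod_rev_app[simp]: "wprod C (rev is) (wprod C is x) = x"
  by (induction "is" arbitrary: x) auto
lemma wprod_app_rev[simp]: "wprod C is (wprod C (rev is) x) = x"
  using wprod_rev_app[of "rev is"] by simp
lemma cw_rev_app[simp]: "cw C (rev is) (cw C is x) = x"
  by (induction "is" arbitrary: x) auto
lemma cw_app_rev[simp]: "cw C is (cw C (rev is) x) = x"
  using cw_rev_app[of "rev is"] by simp
lemma wprod_rev_inv[simp]: "wprod C (rev is) \<circ> wprod C is = id" by auto
lemma wprod_inv_rev[simp]: "wprod C is \<circ> wprod C (rev is) = id" by auto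
lemma cw_rev_inv[simp]: "cw C (rev is) \<circ> cw C is = id" by auto
lemma cw_inv_rev[simp]: "cw C is \<circ> cw C (rev is) = id" by auto

lemma pr_srefl_cs[simp]: "pr (srefl C i lam) (cs C i h) = pr lam h"
proof -
  define A where "A = (\<Sum>l\<in>UNIV. C i l * h l)"
  have ch: "cs C i h = (\<lambda>k. h k - A * dl i k)" by (auto simp: cs_def dl_def A_def)
  have "pr (srefl C i lam) (cs C i h) = (\<Sum>k\<in>UNIV. lk lam k * h k - lk lam i * (C i k * h k)
        - A * (lk lam k * dl i k) + lk lam i * A * (C i k * dl i k))"
    unfolding pr_def ch lookup_srefl by (rule sum.cong) (auto simp: algebra_simps)
  also have "\<dots> = pr lam h - lk lam i * A - A * lk lam i + lk lam i * A * 2"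
    by (simp add: sum.distrib sum_subtractf sum_distrib_left[symmetric] pr_def A_def)
  finally show ?thesis by (simp add: algebra_simps)
qed

lemma pr_wprod_cw[simp]: "pr (wprod C is lam) (cw C is h) = pr lam h"
  by (induction "is") auto

end

context cm begin

lemma wprod_rev_eq: assumes "wprod C is = wprod C js" shows "wprod C (rev is) = wprod C (rev js)"
proof
  fix x
  have "wprod C (rev is) x = wprod C (rev is) (wprod C js (wprod C (rev js) x))" by simp
  also have "\<dots> = wprod C (rev js) x" by (simp add: assms[symmetric])
  finally show "wprod C (rev is) x = wprod C (rev js) x" .
qed

lemma cw_wd: assumes "wprod C is = wprod C js" shows "cw C is = cw C js"
proof (intro ext)
  fix h k
  have "cw C is h k = pr (fw k) (cw C is h)" by simp
  also have "\<dots> = pr (wprod C is (wprod C (rev is) (fw k))) (cw C is h)" by simp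
  also have "\<dots> = pr (wprod C (rev is) (fw k)) h" by (rule pr_wprod_cw)
  also have "\<dots> = pr (wprod C (rev js) (fw k)) h" using wprod_rev_eq[OF assms] by simp
  also have "\<dots> = pr (wprod C js (wprod C (rev js) (fw k))) (cw C js h)" by (rule pr_wprod_cw[symmetric])
  also have "\<dots> = cw C js h k" by simp
  finally show "cw C is h k = cw C js h k" .
qed

definition cwf :: "('i weight \<Rightarrow> 'i weight) \<Rightarrow> ('i \<Rightarrow> int) \<Rightarrow> ('i \<Rightarrow> int)" where
  "cwf w = cw C (SOME is. wprod C is = w)"

lemma cwf_wprod[simp]: "cwf (wprod C is) = cw C is"
  unfolding cwf_def by (rule cw_wd) (rule someI[of "\<lambda>js. wprod C js = wprod C is"], rule refl)

lemma weyl_wprod[simp, intro]: "wprod C is \<in> weyl C" by (simp add: weyl_def)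
lemma weylE: assumes "w \<in> weyl C" obtains "is" where "w = wprod C is"
  using assms by (auto simp: weyl_def)

lemma wlen_le: "wlen C (wprod C is) \<le> length is"
  unfolding wlen_def by (rule Least_le) auto

lemma wlen_ex: assumes "w \<in> weyl C" shows "\<exists>is. length is = wlen C w \<and> wprod C is = w"
proof -
  from assms obtain js where "w = wprod C js" by (auto elim: weylE)
  then have "\<exists>k is. length is = k \<and> wprod C is = w" by auto
  then show ?thesis unfolding wlen_def by (rule LeastI_ex)
qed

lemma weyl_comp[simp, intro]: "v \<in> weyl C \<Longrightarrow> u \<in> weyl C \<Longrightarrow> v \<circ> u \<in> weyl C"
  by (auto elim!: weylE simp: wprod_append[symmetric] simp del: wprod_append)

lemma srefl_weyl[simp, intro]: "srefl C i \<in> weyl C"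
  using weyl_wprod[of "[i]"] by simp

lemma wlen_comp_le: assumes "w \<in> weyl C" shows "wlen C (w \<circ> srefl C i) \<le> wlen C w + 1"
proof -
  obtain ws where "length ws = wlen C w" "wprod C ws = w" using wlen_ex[OF assms] by blast
  then have "w \<circ> srefl C i = wprod C (ws @ [i])" by simp
  then show ?thesis using wlen_le[of "ws @ [i]"] \<open>length ws = wlen C w\<close> by simp
qed

lemma wlen0: assumes "w \<in> weyl C" "wlen C w = 0" shows "w = id"
  using wlen_ex[OF assms(1)] assms(2) by auto

lemma cwf_comp: "v \<in> weyl C \<Longrightarrow> u \<in> weyl C \<Longrightarrow> cwf (v \<circ> u) = cwf v \<circ> cwf u"
  by (auto elim!: weylE simp: wprod_append[symmetric] simp del: wprod_append)

lemma cwf_srefl[simp]: "cwf (srefl C i) = cs C i"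
  using cwf_wprod[of "[i]"] by simp

lemma cs_lin: "cs C i (\<lambda>k. a * x k + b * y k) = (\<lambda>k. a * cs C i x k + b * cs C i y k)"
  by (auto simp: cs_def algebra_simps sum.distrib sum_distrib_left)

lemma cw_lin: "cw C is (\<lambda>k. a * x k + b * y k) = (\<lambda>k. a * cw C is x k + b * cw C is y k)"
  by (induction "is") (auto simp: cs_lin)

lemma cw_neg: "cw C is (\<lambda>k. - x k) = (\<lambda>k. - cw C is x k)"
  using cw_lin[of "is" "-1" x 0 x] by simp

lemma cs_neg: "cs C i (\<lambda>k. - x k) = (\<lambda>k. - cs C i x k)"
  using cw_neg[of "[i]"] by simp

lemma cs_dl_self: "cs C i (dl i) = (\<lambda>k. - dl i k)"
  unfolding cs_def sum_dl by (auto simp: dl_def)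

lemma pr_orbit: "pr (wprod C is (fw k)) (cw C is (dl k)) = 1"
  by (simp add: dl_def)

lemma cw_dl_nz: "cw C is (dl k) \<noteq> (\<lambda>_. 0)"
  using pr_orbit[of "is" k] by (auto simp: pr_def)

lemma pr_cs: "pr (srefl C i lam) h = pr lam (cs C i h)"
  using pr_srefl_cs[of i lam "cs C i h"] by simp

end

lemma sum_two: fixes f :: "'i::finite \<Rightarrow> 'a::comm_monoid_add"
  assumes "i \<noteq> j" "\<And>a. a \<noteq> i \<Longrightarrow> a \<noteq> j \<Longrightarrow> f a = 0"
  shows "(\<Sum>a\<in>UNIV. f a) = f i + f j"
proof -
  have "(\<Sum>a\<in>UNIV. f a) = (\<Sum>a\<in>{i,j}. f a)"
    by (rule sum.mono_neutral_right) (auto simp: assms)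
  then show ?thesis using assms by simp
qed

lemma cartan_D: assumes "cartan_simple C"
  shows "C i i = 2" "i \<noteq> j \<longrightarrow> C i j \<le> 0" "C i j = 0 \<longleftrightarrow> C j i = 0"
proof -
  have h: "(\<forall>i. C i i = 2) \<and> (\<forall>i j. i \<noteq> j \<longrightarrow> C i j \<le> 0) \<and> (\<forall>i j. C i j = 0 \<longleftrightarrow> C j i = 0)"
    using assms unfolding cartan_simple_def by (elim conjE) (intro conjI; assumption)
  show "C i i = 2" using h by blast
  show "i \<noteq> j \<longrightarrow> C i j \<le> 0" using h by blast
  show "C i j = 0 \<longleftrightarrow> C j i = 0" using h by blast
qed

lemma cartan_prod_lt4:
  assumes cs: "cartan_simple C" and ij: "i \<noteq> j"
  shows "C i j * C j i < 4"
proof -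
  obtain e :: "'a \<Rightarrow> real" where epos: "\<forall>i. e i > 0"
    and esym: "\<forall>i j. of_int (C i j) * e j = of_int (C j i) * e i"
    and pd: "\<forall>x::'a \<Rightarrow> real. (\<exists>i. x i \<noteq> 0) \<longrightarrow>
            (\<Sum>i\<in>UNIV. \<Sum>j\<in>UNIV. x i * of_int (C i j) * e j * x j) > 0"
    using cs unfolding cartan_simple_def by (elim conjE exE) (rule that; assumption)
  have d: "C k k = 2" for k using cartan_D(1)[OF cs] by blast
  define c where "c = of_int (C i j) * e j"
  have c2: "of_int (C j i) * e i = c" using esym c_def by (metis (no_types))
  define x where "x = (\<lambda>k. if k = i then - c else if k = j then 2 * e i else 0)"
  have "x j \<noteq> 0" using epos[rule_format, of i] ij by (auto simp: x_def)
  then have pos: "(\<Sum>a\<in>UNIV. \<Sum>b\<in>UNIV. x a * of_int (C a b) * e b * x b) > 0" using pd by blast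
  have inner: "(\<Sum>b\<in>UNIV. x a * of_int (C a b) * e b * x b) =
      x a * of_int (C a i) * e i * x i + x a * of_int (C a j) * e j * x j" for a
    by (rule sum_two[OF ij]) (auto simp: x_def)
  have "(\<Sum>a\<in>UNIV. \<Sum>b\<in>UNIV. x a * of_int (C a b) * e b * x b) =
      (x i * of_int (C i i) * e i * x i + x i * of_int (C i j) * e j * x j) +
      (x j * of_int (C j i) * e i * x i + x j * of_int (C j j) * e j * x j)"
    unfolding inner by (rule sum_two[OF ij]) (auto simp: x_def)
  also have "\<dots> = 2 * e i ^ 2 * e j * (4 - of_int (C i j * C j i))"
  proof -
    have xi: "x i = - c" and xj: "x j = 2 * e i" using ij by (auto simp: x_def)
    have t1: "x i * of_int (C i i) * e i * x i = 2 * e i * (c * c)" unfolding xi d by simp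
    have t2: "x i * of_int (C i j) * e j * x j = - 2 * e i * (c * c)"
      unfolding xi xj by (simp add: c_def algebra_simps)
    have t3: "x j * of_int (C j i) * e i * x i = - 2 * e i * (c * c)"
    proof -
      have "x j * of_int (C j i) * e i * x i = x j * (of_int (C j i) * e i) * x i" by (simp add: algebra_simps)
      also have "\<dots> = - 2 * e i * (c * c)" unfolding c2 xi xj by (simp add: algebra_simps)
      finally show ?thesis .
    qed
    have t4: "x j * of_int (C j j) * e j * x j = 8 * e i * e i * e j" unfolding xj d by simp
    have cc: "c * c = of_int (C i j * C j i) * e i * e j"
    proof -
      have "c * c = (of_int (C i j) * e j) * (of_int (C j i) * e i)" using c2 c_def by simp
      then show ?thesis by (simp add: algebra_simps)
    qed
    show ?thesis unfolding t1 t2 t3 t4 cc by (simp add: algebra_simps power2_eq_square)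
  qed
  finally have "2 * e i ^ 2 * e j * (4 - of_int (C i j * C j i)) > 0" using pos by simp
  moreover have "2 * e i ^ 2 * e j > 0" using epos[rule_format, of i] epos[rule_format, of j] by simp
  ultimately have "4 - of_int (C i j * C j i) > (0::real)"
    by (metis zero_less_mult_pos)
  then show ?thesis by linarith
qed

lemma cartan_cases:
  assumes cs: "cartan_simple C" and ij: "i \<noteq> j"
  shows "(C i j = 0 \<and> C j i = 0) \<or> (C i j = -1 \<and> C j i = -1) \<or> (C i j = -1 \<and> C j i = -2)
       \<or> (C i j = -2 \<and> C j i = -1) \<or> (C i j = -1 \<and> C j i = -3) \<or> (C i j = -3 \<and> C j i = -1)"
proof -
  have a: "C i j \<le> 0" "C j i \<le> 0" "C i j = 0 \<longleftrightarrow> C j i = 0"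
    using cartan_D(2)[OF cs, of i j] cartan_D(2)[OF cs, of j i] cartan_D(3)[OF cs, of i j] ij by auto
  have p: "C i j * C j i < 4" by (rule cartan_prod_lt4[OF cs ij])
  show ?thesis
  proof (cases "C i j = 0")
    case True then show ?thesis using a by simp
  next
    case False
    then have n: "C i j \<le> -1" "C j i \<le> -1" using a by auto
    have b1: "C i j \<ge> -3"
    proof (rule ccontr)
      assume "\<not> C i j \<ge> -3"
      then have "(-C i j) * (- C j i) \<ge> 4 * 1" using n by (intro mult_mono) auto
      then show False using p by simp
    qed
    have b2: "C j i \<ge> -3"
    proof (rule ccontr)
      assume "\<not> C j i \<ge> -3"
      then have "(-C i j) * (- C j i) \<ge> 1 * 4" using n by (intro mult_mono) auto
      then show False using p by simp
    qed
    have "C i j = -3 \<or> C i j = -2 \<or> C i j = -1" "C j i = -3 \<or> C j i = -2 \<or> C j i = -1"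
      using n b1 b2 by linarith+
    then show ?thesis using p by (elim disjE) simp_all
  qed
qed


fun alt :: "'i \<Rightarrow> 'i \<Rightarrow> nat \<Rightarrow> 'i list" where
  "alt a b 0 = []"
| "alt a b (Suc k) = alt b a k @ [a]"

lemma alt_add: "alt a b (n + k) = (if even k then alt a b n else alt b a n) @ alt a b k"
  by (induction k arbitrary: a b) auto

lemma length_alt[simp]: "length (alt a b k) = k"
  by (induction k arbitrary: a b) auto

lemma set_alt: "set (alt a b k) \<subseteq> {a, b}"
  by (induction k arbitrary: a b) auto

lemma alt_char:
  assumes "set rs \<subseteq> {a, b}" "successively (\<noteq>) rs" "rs \<noteq> [] \<Longrightarrow> last rs = a"
  shows "rs = alt a b (length rs)"
  using assms
proof (induction rs arbitrary: a b rule: rev_induct)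
  case Nil then show ?case by simp
next
  case (snoc x xs)
  then have xa: "x = a" by simp
  show ?case
  proof (cases xs rule: rev_cases)
    case Nil then show ?thesis using xa by simp
  next
    case (snoc ys y)
    have "successively (\<noteq>) xs" using snoc.prems(2) by (simp add: successively_append_iff)
    moreover have "y \<noteq> x" using snoc.prems(2) \<open>xs = ys @ [y]\<close> by (simp add: successively_append_iff)
    moreover have "y \<in> {a, b}" using snoc.prems(1) \<open>xs = ys @ [y]\<close> by auto
    ultimately have "y = b" "set xs \<subseteq> {b, a}" "last xs = b" using xa snoc.prems(1) \<open>xs = ys @ [y]\<close> by auto
    then have "xs = alt b a (length xs)" using snoc.IH \<open>successively (\<noteq>) xs\<close> by blast
    then show ?thesis using xa by simp
  qed
qed

lemma not_successively: "\<not> successively (\<noteq>) rs \<Longrightarrow> \<exists>p x q. rs = p @ x # x # q"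
proof (induction rs)
  case Nil then show ?case by simp
next
  case (Cons x xs)
  show ?case
  proof (cases xs)
    case Nil then show ?thesis using Cons by simp
  next
    case (Cons y ys)
    show ?thesis
    proof (cases "x = y")
      case True then show ?thesis using Cons by (metis append_Nil)
    next
      case False
      then have "\<not> successively (\<noteq>) xs" using Cons.prems \<open>xs = y # ys\<close> by simp
      then obtain p z q where "xs = p @ z # z # q" using Cons.IH by blast
      then show ?thesis by (metis append_Cons)
    qed
  qed
qed

context cm begin

definition comb :: "'i \<Rightarrow> 'i \<Rightarrow> int \<Rightarrow> int \<Rightarrow> 'i \<Rightarrow> int" where
  "comb i j a b = (\<lambda>l. a * dl i l + b * dl j l)"

lemma sum_comb: "i \<noteq> j \<Longrightarrow> (\<Sum>l\<in>UNIV. C k l * comb i j a b l) = a * C k i + b * C k j"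
proof -
  have "(\<Sum>l\<in>UNIV. C k l * comb i j a b l) = (\<Sum>l\<in>UNIV. (a * C k l) * dl i l + (b * C k l) * dl j l)"
    by (rule sum.cong) (auto simp: comb_def algebra_simps)
  also have "\<dots> = a * C k i + b * C k j" by (simp only: sum.distrib sum_dl)
  finally show ?thesis .
qed

lemma cs_comb_i: assumes "i \<noteq> j" shows "cs C i (comb i j a b) = comb i j (- a - C i j * b) b"
  unfolding cs_def sum_comb[OF assms] by (rule ext) (use assms in \<open>auto simp: comb_def dl_def algebra_simps\<close>)

lemma cs_comb_j: assumes "i \<noteq> j" shows "cs C j (comb i j a b) = comb i j a (- b - C j i * a)"
  unfolding cs_def sum_comb[OF assms] by (rule ext) (use assms in \<open>auto simp: comb_def dl_def algebra_simps\<close>)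

lemma dl_comb: "dl i = comb i j 1 0" by (simp add: comb_def)

definition P2 :: "'i \<Rightarrow> 'i \<Rightarrow> ('i \<Rightarrow> int) \<Rightarrow> bool" where
  "P2 i j h \<longleftrightarrow> (\<exists>a b. 0 \<le> a \<and> 0 \<le> b \<and> h = comb i j a b)"

lemma P2I: "0 \<le> a \<Longrightarrow> 0 \<le> b \<Longrightarrow> P2 i j (comb i j a b)" by (auto simp: P2_def)

lemma b2: "C i j = 0 \<Longrightarrow> C j i = 0 \<Longrightarrow> wprod C (alt i j 2) lam = wprod C (alt j i 2) lam"
  by (rule lookup_eqI; simp add: numeral_eq_Suc lookup_srefl algebra_simps)
lemma b3: "C i j = -1 \<Longrightarrow> C j i = -1 \<Longrightarrow> wprod C (alt i j 3) lam = wprod C (alt j i 3) lam"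
  by (rule lookup_eqI; simp add: numeral_eq_Suc lookup_srefl algebra_simps)
lemma b4: "C i j = -1 \<Longrightarrow> C j i = -2 \<Longrightarrow> wprod C (alt i j 4) lam = wprod C (alt j i 4) lam"
  by (rule lookup_eqI; simp add: numeral_eq_Suc lookup_srefl algebra_simps)
lemma b6: "C i j = -1 \<Longrightarrow> C j i = -3 \<Longrightarrow> wprod C (alt i j 6) lam = wprod C (alt j i 6) lam"
  by (rule lookup_eqI; simp add: numeral_eq_Suc lookup_srefl algebra_simps)
lemma braid_tab:
  assumes "i \<noteq> j"
    "(C i j = 0 \<and> C j i = 0 \<and> m = 2) \<or> (C i j = -1 \<and> C j i = -1 \<and> m = 3) \<or> (C i j = -1 \<and> C j i = -2 \<and> m = 4)
       \<or> (C i j = -2 \<and> C j i = -1 \<and> m = 4) \<or> (C i j = -1 \<and> C j i = -3 \<and> m = 6) \<or> (C i j = -3 \<and> C j i = -1 \<and> m = 6)"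
  shows "wprod C (alt i j m) = wprod C (alt j i m)"
  using assms(2)
proof (elim disjE conjE)
  assume "C i j = 0" "C j i = 0" "m = 2" then show ?thesis using b2 by auto
next
  assume "C i j = -1" "C j i = -1" "m = 3" then show ?thesis using b3 by auto
next
  assume "C i j = -1" "C j i = -2" "m = 4" then show ?thesis using b4 by auto
next
  assume "C i j = -2" "C j i = -1" "m = 4" then show ?thesis using b4[of j i] by auto
next
  assume "C i j = -1" "C j i = -3" "m = 6" then show ?thesis using b6 by auto
next
  assume "C i j = -3" "C j i = -1" "m = 6" then show ?thesis using b6[of j i] by auto
qed

lemma pos_tab:
  assumes ij: "i \<noteq> j" and tab:
    "(C i j = 0 \<and> C j i = 0 \<and> m = 2) \<or> (C i j = -1 \<and> C j i = -1 \<and> m = 3) \<or> (C i j = -1 \<and> C j i = -2 \<and> m = 4)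
       \<or> (C i j = -2 \<and> C j i = -1 \<and> m = 4) \<or> (C i j = -1 \<and> C j i = -3 \<and> m = 6) \<or> (C i j = -3 \<and> C j i = -1 \<and> m = 6)"
    and km: "k < m"
  shows "P2 i j (cw C (alt j i k) (dl i))"
  using tab km unfolding dl_comb[of i j]
  by (elim disjE conjE; simp add: numeral_eq_Suc less_Suc_eq; elim disjE;
      simp add: cs_comb_i[OF ij] cs_comb_j[OF ij] P2I)

end

context cm begin

definition lI :: "'i \<Rightarrow> 'i \<Rightarrow> ('i weight \<Rightarrow> 'i weight) \<Rightarrow> nat" where
  "lI i j u = (LEAST k. \<exists>vs. set vs \<subseteq> {i,j} \<and> length vs = k \<and> wprod C vs = u)"

lemma lI_le: "set vs \<subseteq> {i,j} \<Longrightarrow> lI i j (wprod C vs) \<le> length vs"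
  unfolding lI_def by (rule Least_le) auto

lemma lI_ex: assumes "set vs \<subseteq> {i,j}"
  shows "\<exists>rs. set rs \<subseteq> {i,j} \<and> length rs = lI i j (wprod C vs) \<and> wprod C rs = wprod C vs"
proof -
  have "\<exists>k rs. set rs \<subseteq> {i,j} \<and> length rs = k \<and> wprod C rs = wprod C vs" using assms by blast
  then show ?thesis unfolding lI_def by (rule LeastI_ex)
qed

lemma wprod_xx: "wprod C (p @ x # x # q) = wprod C (p @ q)"
  by (auto simp: fun_eq_iff)

lemma wprod_snoc_srefl: "wprod C (rs @ [i]) \<circ> srefl C i = wprod C rs"
  by (auto simp: fun_eq_iff)

lemma DL_gen:
  assumes ij: "i \<noteq> j" and braid: "wprod C (alt i j m) = wprod C (alt j i m)" and m1: "m \<ge> 1"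
    and pos: "\<And>k. k < m \<Longrightarrow> P2 i j (cw C (alt j i k) (dl i))"
    and vs: "set vs \<subseteq> {i,j}" and len: "lI i j (wprod C vs \<circ> srefl C i) \<ge> lI i j (wprod C vs)"
  shows "P2 i j (cw C vs (dl i))"
proof -
  obtain rs where rs: "set rs \<subseteq> {i,j}" "length rs = lI i j (wprod C vs)" "wprod C rs = wprod C vs"
    using lI_ex[OF vs] by blast
  have cweq: "cw C vs = cw C rs" using cw_wd rs(3) by metis
  have succ: "successively (\<noteq>) rs"
  proof (rule ccontr)
    assume "\<not> successively (\<noteq>) rs"
    then obtain p x q where rsd: "rs = p @ x # x # q" using not_successively by blast
    then have "wprod C (p @ q) = wprod C vs" using rs(3) wprod_xx by metis
    moreover have "set (p @ q) \<subseteq> {i,j}" using rs(1) rsd by auto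
    ultimately have "lI i j (wprod C vs) \<le> length (p @ q)" using lI_le by metis
    then show False using rs(2) rsd by simp
  qed
  have lst: "rs \<noteq> [] \<Longrightarrow> last rs = j"
  proof (rule ccontr)
    assume ne: "rs \<noteq> []" and "last rs \<noteq> j"
    then have "last rs = i" using rs(1) last_in_set[OF ne] by blast
    then have rsd: "rs = butlast rs @ [i]" using ne by (metis append_butlast_last_id)
    then have "wprod C vs \<circ> srefl C i = wprod C (butlast rs)" using rs(3) wprod_snoc_srefl by metis
    moreover have "set (butlast rs) \<subseteq> {i,j}" using rs(1) by (meson in_set_butlastD subset_iff)
    ultimately have "lI i j (wprod C vs \<circ> srefl C i) \<le> length (butlast rs)" using lI_le by metis
    moreover have "length (butlast rs) < length rs" using ne by simp
    ultimately show False using len rs(2) by linarith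
  qed
  have rsalt: "rs = alt j i (length rs)"
    using alt_char[of rs j i] rs(1) succ lst by blast
  show ?thesis
  proof (cases "length rs < m")
    case True
    then show ?thesis using pos[OF True] rsalt cweq by metis
  next
    case False
    define n where "n = length rs - m"
    have "length rs = n + m" using False n_def by simp
    then have "rs = (if even m then alt j i n else alt i j n) @ alt j i m"
      using rsalt alt_add by metis
    moreover define pre where "pre = (if even m then alt j i n else alt i j n)"
    ultimately have rs2: "rs = pre @ alt j i m" by simp
    obtain m' where m': "m = Suc m'" using m1 by (cases m) auto
    have "wprod C vs = wprod C (pre @ alt j i m' @ [i])"
      using rs(3) rs2 braid m' by simp
    then have "wprod C vs \<circ> srefl C i = wprod C (pre @ alt j i m')"
      using wprod_snoc_srefl[of "pre @ alt j i m'" i] by simp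
    moreover have "set (pre @ alt j i m') \<subseteq> {i,j}"
      using set_alt[of j i m'] set_alt[of i j n] set_alt[of j i n] by (auto simp: pre_def)
    ultimately have "lI i j (wprod C vs \<circ> srefl C i) \<le> length (pre @ alt j i m')" using lI_le by metis
    moreover have "length rs = length pre + Suc m'" using rs2 m' by simp
    ultimately show ?thesis using len rs(2) by simp
  qed
qed

end

locale cmc = cm +
  assumes csimp: "cartan_simple C"
begin

lemma DL:
  assumes ij: "i \<noteq> j" and vs: "set vs \<subseteq> {i,j}" and len: "lI i j (wprod C vs \<circ> srefl C i) \<ge> lI i j (wprod C vs)"
  shows "P2 i j (cw C vs (dl i))"
proof -
  have "\<exists>m::nat. (C i j = 0 \<and> C j i = 0 \<and> m = 2) \<or> (C i j = -1 \<and> C j i = -1 \<and> m = 3) \<or> (C i j = -1 \<and> C j i = -2 \<and> m = 4)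
       \<or> (C i j = -2 \<and> C j i = -1 \<and> m = 4) \<or> (C i j = -1 \<and> C j i = -3 \<and> m = 6) \<or> (C i j = -3 \<and> C j i = -1 \<and> m = 6)"
    using cartan_cases[OF csimp ij] by blast
  then obtain m :: nat where tab: "(C i j = 0 \<and> C j i = 0 \<and> m = 2) \<or> (C i j = -1 \<and> C j i = -1 \<and> m = 3) \<or> (C i j = -1 \<and> C j i = -2 \<and> m = 4)
       \<or> (C i j = -2 \<and> C j i = -1 \<and> m = 4) \<or> (C i j = -1 \<and> C j i = -3 \<and> m = 6) \<or> (C i j = -3 \<and> C j i = -1 \<and> m = 6)"
    by blast
  have m1: "m \<ge> 1" using tab by auto
  show ?thesis
    by (rule DL_gen[OF ij braid_tab[OF ij tab] m1 pos_tab[OF ij tab] vs len])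
qed

end

context cmc begin

lemma lI_cons_le: assumes "set vs \<subseteq> {i,j}" "k \<in> {i,j}"
  shows "lI i j (wprod C (k # vs)) \<le> lI i j (wprod C vs) + 1"
proof -
  obtain rs where rs: "set rs \<subseteq> {i,j}" "length rs = lI i j (wprod C vs)" "wprod C rs = wprod C vs"
    using lI_ex[OF assms(1)] by blast
  have "wprod C (k # vs) = wprod C (k # rs)" using rs(3) by simp
  moreover have "set (k # rs) \<subseteq> {i,j}" using rs(1) assms(2) by auto
  ultimately show ?thesis using lI_le[of "k # rs" i j] rs(2) by simp
qed

lemma wlen_lI: assumes "v \<in> weyl C" "set vs \<subseteq> {i,j}"
  shows "wlen C (v \<circ> wprod C vs) \<le> wlen C v + lI i j (wprod C vs)"
proof -
  obtain ws where ws: "length ws = wlen C v" "wprod C ws = v" using wlen_ex[OF assms(1)] by blast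
  obtain rs where rs: "set rs \<subseteq> {i,j}" "length rs = lI i j (wprod C vs)" "wprod C rs = wprod C vs"
    using lI_ex[OF assms(2)] by blast
  have "v \<circ> wprod C vs = wprod C (ws @ rs)" using ws rs by simp
  then show ?thesis using wlen_le[of "ws @ rs"] ws rs by simp
qed

lemma cwf_id: "cwf id = id" using cwf_wprod[of "[]"] by simp

lemma humphreys_aux:
  "\<forall>w i. w \<in> weyl C \<longrightarrow> wlen C w = n \<longrightarrow> wlen C (w \<circ> srefl C i) \<ge> n \<longrightarrow> nonneg (cwf w (dl i))"
proof (induction n rule: less_induct)
  case (less n)
  show ?case
  proof (intro allI impI)
    fix w i assume w: "w \<in> weyl C" and wn: "wlen C w = n" and wi: "wlen C (w \<circ> srefl C i) \<ge> n"
    show "nonneg (cwf w (dl i))"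
    proof (cases "n = 0")
      case True
      then have "w = id" using wlen0[OF w] wn by simp
      then show ?thesis by (simp add: cwf_id nonneg_def dl_def)
    next
      case False
      obtain ws where ws: "length ws = n" "wprod C ws = w" using wlen_ex[OF w] wn by blast
      then have "ws \<noteq> []" using False by auto
      then obtain ws' j where wsd: "ws = ws' @ [j]" by (metis append_butlast_last_id)
      have wj: "w \<circ> srefl C j = wprod C ws'" using ws(2) wsd wprod_snoc_srefl by metis
      have ws'n: "wlen C (wprod C ws') \<le> n - 1" using wlen_le[of ws'] ws(1) wsd by simp
      have ij: "i \<noteq> j"
      proof
        assume "i = j"
        then have "wlen C (w \<circ> srefl C i) \<le> n - 1" using wj ws'n by simp
        then show False using wi False by simp
      qed
      define A where "A = {v. v \<in> weyl C \<and> (\<exists>vs. set vs \<subseteq> {i,j} \<and> v \<circ> wprod C vs = w \<and> wlen C v + lI i j (wprod C vs) \<le> n)}"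
      have "wprod C ws' \<in> A"
      proof -
        have "lI i j (wprod C [j]) \<le> 1" using lI_le[of "[j]" i j] by simp
        moreover have "wprod C ws' \<circ> srefl C j = w" using ws(2) wsd by simp
        ultimately show ?thesis unfolding A_def using ws'n False
          by (intro CollectI conjI weyl_wprod exI[of _ "[j]"]) auto
      qed
      then obtain v where vA: "v \<in> A" and vmin: "\<And>v'. v' \<in> A \<Longrightarrow> wlen C v \<le> wlen C v'"
        using ex_has_least_nat[of "\<lambda>v. v \<in> A" "wprod C ws'" "wlen C"] by blast
      from vA obtain vs where v: "v \<in> weyl C" and vs: "set vs \<subseteq> {i,j}" "v \<circ> wprod C vs = w"
        "wlen C v + lI i j (wprod C vs) \<le> n" unfolding A_def by blast
      have vlt: "wlen C v < n" using vmin[OF \<open>wprod C ws' \<in> A\<close>] ws'n False by simp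
      have vk: "wlen C (v \<circ> srefl C k) \<ge> wlen C v" if k: "k \<in> {i,j}" for k
      proof (rule ccontr)
        assume "\<not> wlen C (v \<circ> srefl C k) \<ge> wlen C v"
        then have lt: "wlen C (v \<circ> srefl C k) < wlen C v" by simp
        have "v \<circ> srefl C k \<in> A" unfolding A_def
        proof (intro CollectI conjI exI[of _ "k # vs"])
          show "v \<circ> srefl C k \<in> weyl C" using v by auto
          show "set (k # vs) \<subseteq> {i,j}" using vs(1) k by auto
          show "v \<circ> srefl C k \<circ> wprod C (k # vs) = w" using vs(2) by (auto simp: fun_eq_iff)
          show "wlen C (v \<circ> srefl C k) + lI i j (wprod C (k # vs)) \<le> n"
            using lI_cons_le[OF vs(1) k] lt vs(3) by linarith
        qed
        then show False using vmin lt by fastforce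
      qed
      have IHi: "nonneg (cwf v (dl i))" using less.IH[OF vlt] v vk[of i] by blast
      have IHj: "nonneg (cwf v (dl j))" using less.IH[OF vlt] v vk[of j] by blast
      have ui: "lI i j (wprod C vs \<circ> srefl C i) \<ge> lI i j (wprod C vs)"
      proof (rule ccontr)
        assume "\<not> ?thesis"
        then have lt: "lI i j (wprod C (vs @ [i])) < lI i j (wprod C vs)" by simp
        have "w \<circ> srefl C i = v \<circ> wprod C (vs @ [i])" using vs(2) by (auto simp: fun_eq_iff)
        then have "wlen C (w \<circ> srefl C i) \<le> wlen C v + lI i j (wprod C (vs @ [i]))"
          using wlen_lI[OF v, of "vs @ [i]" i j] vs(1) by simp
        then show False using lt vs(3) wi by linarith
      qed
      have "P2 i j (cw C vs (dl i))" by (rule DL[OF ij vs(1) ui])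
      then obtain a b where ab: "0 \<le> a" "0 \<le> b" "cw C vs (dl i) = comb i j a b" unfolding P2_def by blast
      obtain vws where vws: "v = wprod C vws" using v by (auto elim: weylE)
      have "cwf w (dl i) = cwf v (cwf (wprod C vs) (dl i))"
        using cwf_comp[OF v weyl_wprod[of vs]] vs(2) by simp
      also have "\<dots> = (\<lambda>l. a * cwf v (dl i) l + b * cwf v (dl j) l)"
        using ab(3) by (simp add: comb_def vws cw_lin)
      finally show ?thesis using IHi IHj ab by (simp add: nonneg_def)
    qed
  qed
qed

lemma humphreys: "w \<in> weyl C \<Longrightarrow> wlen C (w \<circ> srefl C i) \<ge> wlen C w \<Longrightarrow> nonneg (cwf w (dl i))"
  using humphreys_aux by blast

end

context cmc begin

lemma cwf_neg: "w \<in> weyl C \<Longrightarrow> cwf w (\<lambda>k. - x k) = (\<lambda>k. - cwf w x k)"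
  by (auto elim!: weylE simp: cw_neg)

lemma dich_w: "nonneg (cw C ws (dl i)) \<or> nonpos (cw C ws (dl i))"
proof (cases "wlen C (wprod C ws \<circ> srefl C i) \<ge> wlen C (wprod C ws)")
  case True
  then show ?thesis using humphreys[of "wprod C ws" i] by simp
next
  case False
  have e: "wprod C (ws @ [i]) \<circ> srefl C i = wprod C ws" by (simp add: fun_eq_iff)
  have e2: "wprod C (ws @ [i]) = wprod C ws \<circ> srefl C i" by simp
  have "wlen C (wprod C (ws @ [i]) \<circ> srefl C i) \<ge> wlen C (wprod C (ws @ [i]))"
    unfolding e using False e2 by simp
  from humphreys[OF weyl_wprod this] have "nonneg (cw C (ws @ [i]) (dl i))" unfolding cwf_wprod .
  moreover have "cw C (ws @ [i]) (dl i) = (\<lambda>k. - cw C ws (dl i) k)"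
    by (simp add: cs_dl_self cw_neg)
  ultimately show ?thesis by (simp add: nonneg_def nonpos_def)
qed

lemma pr_supp: "pr lam (\<lambda>m. c * dl i m) = lk lam i * c"
proof -
  have "pr lam (\<lambda>m. c * dl i m) = (\<Sum>m\<in>UNIV. (lk lam m * c) * dl i m)"
    unfolding pr_def by (rule sum.cong) (auto simp: algebra_simps)
  then show ?thesis by simp
qed

lemma lemC:
  assumes nn: "nonneg (cw C ws (dl k))" and ne: "cw C ws (dl k) \<noteq> dl i"
  shows "nonneg (cs C i (cw C ws (dl k)))"
proof -
  define h where "h = cw C ws (dl k)"
  have "\<exists>m. m \<noteq> i \<and> h m \<noteq> 0"
  proof (rule ccontr)
    assume "\<not> ?thesis"
    then have hs: "h = (\<lambda>m. h i * dl i m)" by (intro ext) (auto simp: dl_def)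
    have "pr (wprod C ws (fw k)) h = 1" unfolding h_def by (rule pr_orbit)
    then have "lk (wprod C ws (fw k)) i * h i = 1" using pr_supp hs by metis
    then have "h i = 1 \<or> h i = -1" using zmult_eq_1_iff by blast
    moreover have "h i \<ge> 0" using nn by (simp add: h_def nonneg_def)
    ultimately have "h i = 1" by auto
    then have "h = dl i" using hs by simp
    then show False using ne h_def by simp
  qed
  then obtain m where m0: "m \<noteq> i" "h m \<noteq> 0" by blast
  have "h m \<ge> 0" using nn by (simp add: h_def nonneg_def)
  then have m: "m \<noteq> i" "h m > 0" using m0 by auto
  have "cs C i h m > 0" using m by (simp add: cs_def)
  have "cs C i h = cw C (i # ws) (dl k)" by (simp add: h_def)
  have "\<not> nonpos (cs C i h)" unfolding nonpos_def using \<open>cs C i h m > 0\<close> by (metis not_le)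
  then show ?thesis using dich_w[of "i # ws" k] \<open>cs C i h = cw C (i # ws) (dl k)\<close> by (simp add: h_def)
qed

end

context cmc begin

definition ee :: "'a \<Rightarrow> real" where
  "ee = (SOME e :: 'a \<Rightarrow> real. (\<forall>i. e i > 0) \<and> (\<forall>i j. of_int (C i j) * e j = of_int (C j i) * e i))"

lemma ee_ex: "\<exists>e::'a \<Rightarrow> real. (\<forall>i. e i > 0) \<and> (\<forall>i j. of_int (C i j) * e j = of_int (C j i) * e i)"
  using csimp unfolding cartan_simple_def by (elim conjE exE) (intro exI conjI; assumption)

lemma ee_pos: "ee i > 0" and ee_sym: "of_int (C i j) * ee j = of_int (C j i) * ee i"
  using someI_ex[OF ee_ex] unfolding ee_def[symmetric] by blast+

lemma ee_ratio: "of_int (C k i) / ee k = of_int (C i k) / ee i"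
proof -
  have "of_int (C i k) * ee k = of_int (C k i) * ee i" by (rule ee_sym)
  then show ?thesis using ee_pos[of i] ee_pos[of k] by (simp add: field_simps)
qed

definition rr :: "'a \<Rightarrow> ('a \<Rightarrow> real) \<Rightarrow> ('a \<Rightarrow> real)" where
  "rr i x = (\<lambda>t. x t - x i * of_int (C i t))"
definition rw :: "'a list \<Rightarrow> ('a \<Rightarrow> real) \<Rightarrow> ('a \<Rightarrow> real)" where
  "rw ws = foldr (\<lambda>i f. rr i \<circ> f) ws id"
definition re :: "'a weight \<Rightarrow> ('a \<Rightarrow> real)" where
  "re lam = (\<lambda>t. of_int (lk lam t))"
definition nu :: "('a \<Rightarrow> int) \<Rightarrow> ('a \<Rightarrow> real)" where
  "nu h = (\<lambda>t. \<Sum>k\<in>UNIV. of_int (h k) * (of_int (C k t) / ee k))"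

lemma rw_Nil[simp]: "rw [] = id" by (simp add: rw_def)
lemma rw_Cons[simp]: "rw (i # ws) = rr i \<circ> rw ws" by (simp add: rw_def)

lemma re_srefl: "re (srefl C i lam) = rr i (re lam)"
  by (auto simp: re_def rr_def lookup_srefl)

lemma re_wprod: "re (wprod C ws lam) = rw ws (re lam)"
  by (induction ws) (auto simp: re_srefl)

lemma rr_scale: "rr i (\<lambda>t. c * x t) = (\<lambda>t. c * rr i x t)"
  by (auto simp: rr_def algebra_simps)

lemma rw_scale: "rw ws (\<lambda>t. c * x t) = (\<lambda>t. c * rw ws x t)"
  by (induction ws) (auto simp: rr_scale)

lemma re_inj: "re a = re b \<Longrightarrow> a = b"
  by (rule lookup_eqI) (metis of_int_eq_iff re_def)

lemma nu_cs: "nu (cs C i h) = rr i (nu h)"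
proof
  fix t
  define A where "A = (\<Sum>l\<in>UNIV. C i l * h l)"
  have ch: "cs C i h = (\<lambda>k. h k - A * dl i k)" by (auto simp: cs_def dl_def A_def)
  have "nu (cs C i h) t = (\<Sum>k\<in>UNIV. of_int (h k) * (of_int (C k t) / ee k)
        - (of_int A * (of_int (C k t) / ee k)) * of_int (dl i k))"
    unfolding nu_def ch by (rule sum.cong) (auto simp: algebra_simps)
  also have "\<dots> = nu h t - of_int A * (of_int (C i t) / ee i)"
  proof -
    have "(\<Sum>k\<in>UNIV. (of_int A * (of_int (C k t) / ee k)) * (of_int (dl i k) :: real))
        = of_int A * (of_int (C i t) / ee i)"
    proof -
      have "(\<Sum>k\<in>UNIV. (of_int A * (of_int (C k t) / ee k)) * (of_int (dl i k) :: real))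
          = (\<Sum>k\<in>UNIV. if k = i then of_int A * (of_int (C i t) / ee i) else 0)"
        by (rule sum.cong) (auto simp: dl_def)
      then show ?thesis by simp
    qed
    then show ?thesis by (simp add: sum_subtractf nu_def)
  qed
  also have "nu h i = of_int A / ee i"
  proof -
    have "nu h i = (\<Sum>k\<in>UNIV. of_int (h k) * (of_int (C i k) / ee i))"
      unfolding nu_def by (rule sum.cong) (auto simp: ee_ratio)
    also have "\<dots> = (\<Sum>k\<in>UNIV. of_int (C i k * h k)) / ee i"
      by (simp add: sum_divide_distrib algebra_simps)
    also have "\<dots> = of_int A / ee i" by (simp add: A_def)
    finally show ?thesis .
  qed
  then have "rr i (nu h) t = nu h t - of_int A / ee i * of_int (C i t)" by (simp add: rr_def)
  ultimately show "nu (cs C i h) t = rr i (nu h) t" by (simp add: algebra_simps)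
qed

lemma nu_cw: "nu (cw C ws h) = rw ws (nu h)"
  by (induction ws) (auto simp: nu_cs)

lemma nu_dl: "nu (dl k) = (\<lambda>t. (1 / ee k) * re (sr C k) t)"
proof
  fix t
  have "nu (dl k) t = (\<Sum>l\<in>UNIV. if l = k then of_int (C k t) / ee k else 0)"
    unfolding nu_def by (rule sum.cong) (auto simp: dl_def)
  then show "nu (dl k) t = (1 / ee k) * re (sr C k) t" by (simp add: re_def lookup_sr)
qed

lemma pr_sr_dl: "pr (sr C k) (dl k) = 2"
  unfolding pr_def by (simp add: lookup_sr)

lemma lemR: assumes h: "cw C ws (dl k) = dl j" shows "wprod C ws (sr C k) = sr C j"
proof -
  have "nu (dl j) = rw ws (nu (dl k))" using nu_cw[of ws "dl k"] h by simp
  also have "\<dots> = (\<lambda>t. (1 / ee k) * re (wprod C ws (sr C k)) t)"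
    by (simp only: nu_dl rw_scale re_wprod)
  finally have eq: "\<And>t. (1 / ee j) * re (sr C j) t = (1 / ee k) * re (wprod C ws (sr C k)) t"
    by (simp add: nu_dl fun_eq_iff)
  have "pr (wprod C ws (sr C k)) (cw C ws (dl k)) = 2" by (simp add: pr_sr_dl)
  then have two: "lk (wprod C ws (sr C k)) j = 2" using h pr_supp[of _ 1 j] by simp
  have "(1 / ee j) * 2 = (1 / ee k) * 2" using eq[of j] two by (simp add: re_def lookup_sr)
  then have ejk: "ee j = ee k" by simp
  have "re (sr C j) = re (wprod C ws (sr C k))"
    using eq ejk ee_pos[of k] by (auto simp: fun_eq_iff)
  then show ?thesis using re_inj by metis
qed

end

context cmc begin

definition Rp :: "('a weight \<times> ('a \<Rightarrow> int)) set" where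
  "Rp = {(wprod C ws (sr C k), cw C ws (dl k)) | ws k. True}"
definition Rpos where "Rpos = {p \<in> Rp. nonneg (snd p)}"
definition Nset where "Nset lam = {p \<in> Rpos. pr lam (snd p) < 0}"
definition xb :: "'a weight \<times> ('a \<Rightarrow> int) \<Rightarrow> 'a grpring fract" where
  "xb p = emb (1 - gb (- fst p))"
definition chi :: "'a weight \<Rightarrow> 'a grpring fract" where
  "chi lam = (\<Prod>p\<in>Nset lam. xb p powi (pr lam (snd p)))"
definition Inv where "Inv ws = {p \<in> Rpos. nonpos (cw C (rev ws) (snd p))}"

lemma pr_inv: "pr (wprod C ws mu) h = pr mu (cw C (rev ws) h)"
proof -
  have "pr (wprod C ws mu) h = pr (wprod C ws mu) (cw C ws (cw C (rev ws) h))" by simp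
  also have "\<dots> = pr mu (cw C (rev ws) h)" by (rule pr_wprod_cw)
  finally show ?thesis .
qed

lemma RpE: assumes "p \<in> Rp" obtains ws k where "p = (wprod C ws (sr C k), cw C ws (dl k))"
  using assms unfolding Rp_def by blast

lemma RpI[intro]: "(wprod C ws (sr C k), cw C ws (dl k)) \<in> Rp"
  unfolding Rp_def by blast

lemma pr_zero: "pr 0 h = 0" by (simp add: pr_def)

lemma fst_nz: assumes "p \<in> Rp" shows "fst p \<noteq> 0"
proof -
  obtain ws k where p: "p = (wprod C ws (sr C k), cw C ws (dl k))" using assms by (rule RpE)
  have "pr (fst p) (snd p) = 2" by (simp add: p pr_sr_dl)
  then show ?thesis using pr_zero[of "snd p"] by (metis zero_neq_numeral)
qed

lemma emb_nz: "x \<noteq> 0 \<Longrightarrow> emb x \<noteq> 0"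
  by (simp add: emb_def Zero_fract_def eq_fract)

lemma xb_nz: assumes "p \<in> Rp" shows "xb p \<noteq> 0"
proof -
  have "- fst p \<noteq> 0" using fst_nz[OF assms] by simp
  then have "lk (1 - gb (- fst p)) 0 = 1"
    by (simp add: gb_def Poly_Mapping.lookup_minus Poly_Mapping.lookup_one Poly_Mapping.lookup_single when_def)
  then have "1 - gb (- fst p) \<noteq> 0" by auto
  then show ?thesis unfolding xb_def by (rule emb_nz)
qed

lemma orbit_nz: "cw C ws (dl k) \<noteq> (\<lambda>_. 0)" by (rule cw_dl_nz)

lemma Inv_Nil: "Inv [] = {}"
proof -
  { fix p assume "p \<in> Inv []"
    then have p: "p \<in> Rp" "nonneg (snd p)" "nonpos (snd p)" by (auto simp: Inv_def Rpos_def)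
    then have "snd p = (\<lambda>_. 0)" by (intro ext) (metis antisym nonneg_def nonpos_def)
    moreover obtain ws k where "p = (wprod C ws (sr C k), cw C ws (dl k))" using p(1) by (rule RpE)
    ultimately have False using orbit_nz by simp }
  then show ?thesis by blast
qed

definition pact where "pact k p = (srefl C k (fst p), cs C k (snd p))"

lemma pact_pact[simp]: "pact k (pact k p) = p" by (simp add: pact_def)

lemma Inv_Cons: "Inv (k # ws) \<subseteq> insert (sr C k, dl k) (pact k ` Inv ws)"
proof
  fix p assume pI: "p \<in> Inv (k # ws)"
  then have pR: "p \<in> Rp" and nn: "nonneg (snd p)" and np: "nonpos (cw C (rev ws) (cs C k (snd p)))"
    by (auto simp: Inv_def Rpos_def)
  obtain ws0 k0 where p: "p = (wprod C ws0 (sr C k0), cw C ws0 (dl k0))" using pR by (rule RpE)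
  show "p \<in> insert (sr C k, dl k) (pact k ` Inv ws)"
  proof (cases "cw C ws0 (dl k0) = dl k")
    case True
    then have "wprod C ws0 (sr C k0) = sr C k" by (rule lemR)
    then show ?thesis using True p by simp
  next
    case False
    have "nonneg (cs C k (cw C ws0 (dl k0)))" using lemC[of ws0 k0 k] nn False p by simp
    moreover have "pact k p = (wprod C (k # ws0) (sr C k0), cw C (k # ws0) (dl k0))"
      by (simp add: pact_def p)
    moreover have "(wprod C (k # ws0) (sr C k0), cw C (k # ws0) (dl k0)) \<in> Rp" by (rule RpI)
    ultimately have "pact k p \<in> Rp" "nonneg (snd (pact k p))" "nonpos (cw C (rev ws) (snd (pact k p)))"
      using np by (auto simp: pact_def p)
    then have "pact k p \<in> Inv ws" by (simp add: Inv_def Rpos_def)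
    then show ?thesis by (metis imageI insertCI pact_pact)
  qed
qed

lemma fin_Inv: "finite (Inv ws)"
proof (induction ws)
  case Nil then show ?case by (simp add: Inv_Nil)
next
  case (Cons k ws) then show ?case using Inv_Cons finite_subset by blast
qed

lemma Nset_sub: "Nset (wprod C ws (fw j)) \<subseteq> Inv ws"
proof
  fix p assume "p \<in> Nset (wprod C ws (fw j))"
  then have pR: "p \<in> Rp" and nn: "nonneg (snd p)" and lt: "pr (wprod C ws (fw j)) (snd p) < 0"
    by (auto simp: Nset_def Rpos_def)
  obtain ws0 k0 where p: "p = (wprod C ws0 (sr C k0), cw C ws0 (dl k0))" using pR by (rule RpE)
  have g: "cw C (rev ws) (snd p) = cw C (rev ws @ ws0) (dl k0)" by (simp add: p)
  have "cw C (rev ws) (snd p) j < 0" using lt by (simp add: pr_inv)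
  moreover have "nonneg (cw C (rev ws) (snd p)) \<or> nonpos (cw C (rev ws) (snd p))"
    using dich_w[of "rev ws @ ws0" k0] g by simp
  ultimately have "nonpos (cw C (rev ws) (snd p))" unfolding nonneg_def by (metis not_le)
  then show "p \<in> Inv ws" using pR nn by (simp add: Inv_def Rpos_def)
qed

lemma fin_Nset: "finite (Nset (wprod C ws (fw j)))"
  using Nset_sub fin_Inv finite_subset by blast

lemma Nset_Rpos: "Nset lam \<subseteq> Rpos" by (auto simp: Nset_def)

lemma chi_F: assumes "finite F" "Nset lam \<subseteq> F" "F \<subseteq> Rpos"
  shows "chi lam = (\<Prod>p\<in>F. xb p powi (min 0 (pr lam (snd p))))"
proof -
  have "chi lam = (\<Prod>p\<in>Nset lam. xb p powi (min 0 (pr lam (snd p))))"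
    unfolding chi_def by (rule prod.cong) (auto simp: Nset_def)
  also have "\<dots> = (\<Prod>p\<in>F. xb p powi (min 0 (pr lam (snd p))))"
  proof (rule prod.mono_neutral_left[OF assms(1,2)])
    show "\<forall>p\<in>F - Nset lam. xb p powi min 0 (pr lam (snd p)) = 1"
      using assms(3) by (auto simp: Nset_def min_def)
  qed
  finally show ?thesis .
qed

end

context cmc begin

lemma sum_rem_i: "(\<Sum>l\<in>UNIV. C i l * g l) = 2 * g i + (\<Sum>l\<in>UNIV - {i}. C i l * g l)"
  using sum.remove[of UNIV i "\<lambda>l. C i l * g l"] by simp

lemma EX:
  assumes nn0: "nonneg (cw C ws (dl i))" and pP: "p \<in> Rpos"
  shows "min 0 (pr (wprod C (ws @ [i]) (fw i)) (snd p)) + min 0 (pr (wprod C ws (fw i)) (snd p))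
       = (if p = (wprod C ws (sr C i), cw C ws (dl i)) then -1 else 0)
         + (\<Sum>j\<in>UNIV - {i}. min 0 (pr (wprod C ws (fw j)) (snd p)) * (- C i j))"
proof -
  from pP have pR: "p \<in> Rp" and nn: "nonneg (snd p)" by (auto simp: Rpos_def)
  obtain ws0 k0 where p: "p = (wprod C ws0 (sr C k0), cw C ws0 (dl k0))" using pR by (rule RpE)
  define h where "h = snd p"
  define g where "g = cw C (rev ws) h"
  have g2: "g = cw C (rev ws @ ws0) (dl k0)" by (simp add: g_def h_def p)
  have hg: "h = cw C ws g" by (simp add: g_def)
  have e1: "pr (wprod C ws (fw j)) h = g j" for j by (simp add: pr_inv g_def)
  have e2: "pr (wprod C (ws @ [i]) (fw i)) h = cs C i g i"
    using pr_inv[of "ws @ [i]" "fw i" h] by (simp add: g_def)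
  define p0 where "p0 = (wprod C ws (sr C i), cw C ws (dl i))"
  show ?thesis unfolding h_def[symmetric] e1 e2 p0_def[symmetric]
  proof (cases "nonneg g")
    case True
    show "min 0 (cs C i g i) + min 0 (g i) = (if p = p0 then - 1 else 0) + (\<Sum>j\<in>UNIV - {i}. min 0 (g j) * - C i j)"
    proof (cases "g = dl i")
      case True
      have "wprod C (rev ws @ ws0) (sr C k0) = sr C i" using lemR g2 True by metis
      then have "wprod C ws (wprod C (rev ws) (wprod C ws0 (sr C k0))) = wprod C ws (sr C i)" by simp
      then have "wprod C ws0 (sr C k0) = wprod C ws (sr C i)" by simp
      moreover have "cw C ws0 (dl k0) = cw C ws (dl i)" using hg True by (simp add: h_def p)
      ultimately have pp0: "p = p0" by (simp add: p p0_def)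
      have "(\<Sum>j\<in>UNIV - {i}. min 0 (g j) * - C i j) = 0"
        by (rule sum.neutral) (auto simp: True dl_def)
      then show ?thesis using pp0 True by (simp add: cs_dl_self, simp add: dl_def)
    next
      case False
      have "nonneg (cs C i g)" using lemC[of "rev ws @ ws0" k0 i] \<open>nonneg g\<close> False g2 by simp
      then have a: "min 0 (cs C i g i) = 0" by (simp add: nonneg_def)
      have b: "min 0 (g i) = 0" using \<open>nonneg g\<close> by (simp add: nonneg_def)
      have "p \<noteq> p0"
      proof
        assume "p = p0" then have "h = cw C ws (dl i)" by (simp add: h_def p0_def)
        then have "g = dl i" by (simp add: g_def)
        then show False using False by simp
      qed
      moreover have "(\<Sum>j\<in>UNIV - {i}. min 0 (g j) * - C i j) = 0"
        by (rule sum.neutral) (use \<open>nonneg g\<close> in \<open>auto simp: nonneg_def\<close>)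
      ultimately show ?thesis using a b by simp
    qed
  next
    case False
    then have np: "nonpos g" using dich_w[of "rev ws @ ws0" k0] g2 by simp
    have "p \<noteq> p0"
    proof
      assume "p = p0" then have "h = cw C ws (dl i)" by (simp add: h_def p0_def)
      then have "g = dl i" by (simp add: g_def)
      then show False using False by (auto simp: nonneg_def dl_def split: if_splits)
    qed
    have ng: "(\<lambda>k. - g k) = cw C (rev ws @ ws0 @ [k0]) (dl k0)"
      by (simp add: g2 cs_dl_self cw_neg)
    have nng: "nonneg (\<lambda>k. - g k)" using np by (simp add: nonneg_def nonpos_def)
    have "(\<lambda>k. - g k) \<noteq> dl i"
    proof
      assume a: "(\<lambda>k. - g k) = dl i"
      have "h = cw C ws g" by (rule hg)
      also have "g = (\<lambda>k. - dl i k)" using a by (metis minus_minus)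
      finally have "h = (\<lambda>k. - cw C ws (dl i) k)" by (simp add: cw_neg)
      then have "cw C ws (dl i) = (\<lambda>_. 0)" using nn nn0 unfolding h_def
        by (intro ext) (metis antisym neg_0_le_iff_le nonneg_def)
      then show False using orbit_nz by blast
    qed
    then have "nonneg (cs C i (\<lambda>k. - g k))" using lemC[of "rev ws @ ws0 @ [k0]" k0 i] nng ng by simp
    then have "nonpos (cs C i g)" by (simp add: cs_neg nonneg_def nonpos_def)
    then have a: "min 0 (cs C i g i) = cs C i g i" by (simp add: nonpos_def)
    have b: "min 0 (g i) = g i" using np by (simp add: nonpos_def)
    have c: "(\<Sum>j\<in>UNIV - {i}. min 0 (g j) * - C i j) = - (\<Sum>l\<in>UNIV - {i}. C i l * g l)"
    proof -
      have "(\<Sum>j\<in>UNIV - {i}. min 0 (g j) * - C i j) = (\<Sum>l\<in>UNIV - {i}. - (C i l * g l))"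
      proof (rule sum.cong)
        fix l assume "l \<in> UNIV - {i}"
        have "g l \<le> 0" using np by (simp add: nonpos_def)
        then show "min 0 (g l) * - C i l = - (C i l * g l)" by (simp add: min_def algebra_simps)
      qed simp
      then show ?thesis by (simp add: sum_negf)
    qed
    have "cs C i g i = g i - (2 * g i + (\<Sum>l\<in>UNIV - {i}. C i l * g l))"
      by (simp add: cs_def sum_rem_i)
    then show "min 0 (cs C i g i) + min 0 (g i) = (if p = p0 then - 1 else 0) + (\<Sum>j\<in>UNIV - {i}. min 0 (g j) * - C i j)"
      using a b c \<open>p \<noteq> p0\<close> by simp
  qed
qed

end

lemma prod_powi: "finite F \<Longrightarrow> (\<Prod>p\<in>F. f p) powi n = (\<Prod>p\<in>F. (f p :: 'b::field) powi n)"
  by (induction F rule: finite_induct) (auto simp: power_int_mult_distrib)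

lemma powi_sum: assumes "(x::'b::field) \<noteq> 0" "finite J" shows "x powi (\<Sum>j\<in>J. a j) = (\<Prod>j\<in>J. x powi a j)"
  using assms(2)
proof (induction J rule: finite_induct)
  case empty then show ?case by simp
next
  case (insert j J) then show ?case by (simp add: power_int_add assms(1))
qed

lemma prod_powi_add: "(\<And>p. p \<in> F \<Longrightarrow> (f p :: 'b::field) \<noteq> 0) \<Longrightarrow>
   (\<Prod>p\<in>F. f p powi a p) * (\<Prod>p\<in>F. f p powi b p) = (\<Prod>p\<in>F. f p powi (a p + b p))"
  by (simp add: prod.distrib[symmetric] power_int_add)

lemma prod_delta_inv: "finite F \<Longrightarrow> p0 \<in> F \<Longrightarrow>
   inverse (f p0 :: 'b::field) = (\<Prod>p\<in>F. f p powi (if p = p0 then -1 else 0))"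
proof -
  assume F: "finite F" "p0 \<in> F"
  have "(\<Prod>p\<in>F. f p powi (if p = p0 then -1 else 0)) = (\<Prod>p\<in>F. if p = p0 then inverse (f p) else 1)"
    by (rule prod.cong) auto
  also have "\<dots> = inverse (f p0)" using F by (simp add: prod.delta)
  finally show ?thesis by simp
qed

lemma gen_prod: "finite A \<Longrightarrow> (\<And>a. a \<in> A \<Longrightarrow> f a \<in> gen_subring S) \<Longrightarrow> prod f A \<in> gen_subring S"
  by (induction A rule: finite_induct) (auto intro: gen_subring.intros)

lemma gen_pow: "x \<in> gen_subring S \<Longrightarrow> x ^ n \<in> gen_subring S"
  by (induction n) (auto intro: gen_subring.intros)

context cmc begin

lemma REL:
  assumes w: "w \<in> weyl C" and len: "wlen C (w \<circ> srefl C i) = wlen C w + 1"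
  shows "chi ((w \<circ> srefl C i) (fw i)) * chi (w (fw i)) =
          inverse (emb (1 - gb (- w (sr C i)))) *
          (\<Prod>j\<in>UNIV - {i}. chi (w (fw j)) powi (- C i j))"
proof -
  obtain ws where wws: "w = wprod C ws" using w by (auto elim: weylE)
  have nn0: "nonneg (cw C ws (dl i))" using humphreys[OF w, of i] len by (simp add: wws)
  define p0 where "p0 = (wprod C ws (sr C i), cw C ws (dl i))"
  have p0R: "p0 \<in> Rpos" using nn0 by (auto simp: p0_def Rpos_def)
  define lam1 where "lam1 = wprod C (ws @ [i]) (fw i)"
  have fin1: "finite (Nset lam1)" unfolding lam1_def by (rule fin_Nset)
  define F where "F = Nset lam1 \<union> (\<Union>j. Nset (wprod C ws (fw j))) \<union> {p0}"
  have finF: "finite F" unfolding F_def using fin_Nset fin1 by auto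
  have FR: "F \<subseteq> Rpos" unfolding F_def using Nset_Rpos p0R by blast
  have p0F: "p0 \<in> F" by (simp add: F_def)
  have xnz: "\<And>p. p \<in> F \<Longrightarrow> xb p \<noteq> 0" using FR xb_nz by (auto simp: Rpos_def)
  have c1: "chi ((w \<circ> srefl C i) (fw i)) = (\<Prod>p\<in>F. xb p powi (min 0 (pr (wprod C (ws @ [i]) (fw i)) (snd p))))"
  proof -
    have "(w \<circ> srefl C i) (fw i) = lam1" by (simp add: lam1_def wws)
    moreover have "chi lam1 = (\<Prod>p\<in>F. xb p powi (min 0 (pr lam1 (snd p))))"
      by (rule chi_F[OF finF _ FR]) (unfold F_def, blast)
    ultimately show ?thesis by (simp add: lam1_def)
  qed
  have cj: "chi (w (fw j)) = (\<Prod>p\<in>F. xb p powi (min 0 (pr (wprod C ws (fw j)) (snd p))))" for j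
    unfolding wws by (rule chi_F[OF finF _ FR]) (unfold F_def, blast)
  have "chi ((w \<circ> srefl C i) (fw i)) * chi (w (fw i)) =
     (\<Prod>p\<in>F. xb p powi (min 0 (pr (wprod C (ws @ [i]) (fw i)) (snd p)) + min 0 (pr (wprod C ws (fw i)) (snd p))))"
    unfolding c1 cj by (rule prod_powi_add[OF xnz])
  also have "\<dots> = (\<Prod>p\<in>F. xb p powi ((if p = p0 then -1 else 0)
         + (\<Sum>j\<in>UNIV - {i}. min 0 (pr (wprod C ws (fw j)) (snd p)) * (- C i j))))"
  proof (rule prod.cong[OF refl])
    fix p assume "p \<in> F"
    then have "p \<in> Rpos" using FR by blast
    from EX[OF nn0 this] show "xb p powi (min 0 (pr (wprod C (ws @ [i]) (fw i)) (snd p)) + min 0 (pr (wprod C ws (fw i)) (snd p))) =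
      xb p powi ((if p = p0 then -1 else 0) + (\<Sum>j\<in>UNIV - {i}. min 0 (pr (wprod C ws (fw j)) (snd p)) * (- C i j)))"
      unfolding p0_def by (simp only:)
  qed
  also have "\<dots> = (\<Prod>p\<in>F. xb p powi (if p = p0 then -1 else 0)) *
      (\<Prod>p\<in>F. xb p powi (\<Sum>j\<in>UNIV - {i}. min 0 (pr (wprod C ws (fw j)) (snd p)) * (- C i j)))"
    by (rule prod_powi_add[OF xnz, symmetric])
  also have "(\<Prod>p\<in>F. xb p powi (if p = p0 then -1 else 0)) = inverse (emb (1 - gb (- w (sr C i))))"
  proof -
    have "xb p0 = emb (1 - gb (- w (sr C i)))" by (simp add: xb_def p0_def wws)
    then show ?thesis using prod_delta_inv[OF finF p0F, of xb] by simp
  qed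
  also have "(\<Prod>p\<in>F. xb p powi (\<Sum>j\<in>UNIV - {i}. min 0 (pr (wprod C ws (fw j)) (snd p)) * (- C i j)))
     = (\<Prod>p\<in>F. \<Prod>j\<in>UNIV - {i}. xb p powi (min 0 (pr (wprod C ws (fw j)) (snd p)) * (- C i j)))"
    by (rule prod.cong[OF refl]) (rule powi_sum[OF xnz], auto)
  also have "\<dots> = (\<Prod>j\<in>UNIV - {i}. \<Prod>p\<in>F. xb p powi (min 0 (pr (wprod C ws (fw j)) (snd p)) * (- C i j)))"
    by (rule prod.swap)
  also have "\<dots> = (\<Prod>j\<in>UNIV - {i}. chi (w (fw j)) powi (- C i j))"
    by (rule prod.cong[OF refl]) (simp add: cj prod_powi[OF finF] flip: power_int_mult)
  finally show ?thesis .
qed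

lemma chi_fw: "chi (fw i) = 1"
proof -
  have "Nset (fw i) = {}"
  proof -
    { fix p assume "p \<in> Nset (fw i)"
      then have "nonneg (snd p)" "pr (fw i) (snd p) < 0" by (auto simp: Nset_def Rpos_def)
      then have False by (simp add: nonneg_def not_le[symmetric]) }
    then show ?thesis by blast
  qed
  then show ?thesis by (simp add: chi_def)
qed

lemma roots_fst: "p \<in> Rp \<Longrightarrow> fst p \<in> roots C"
  by (auto elim!: RpE simp: roots_def)

lemma chi_denom: "chi (wprod C ws (fw j)) \<in> denom_ring C"
  unfolding chi_def denom_ring_def
proof (rule gen_prod[OF fin_Nset])
  fix p assume pN: "p \<in> Nset (wprod C ws (fw j))"
  then have pR: "p \<in> Rp" and lt: "pr (wprod C ws (fw j)) (snd p) < 0" by (auto simp: Nset_def Rpos_def)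
  have "xb p powi pr (wprod C ws (fw j)) (snd p) = inverse (xb p) ^ nat (- pr (wprod C ws (fw j)) (snd p))"
    using lt by (simp add: power_int_def)
  moreover have "inverse (xb p) \<in> {inverse (emb (1 - gb (- a))) | a. a \<in> roots C}"
    using roots_fst[OF pR] unfolding xb_def by blast
  then have "inverse (xb p) \<in> gen_subring {inverse (emb (1 - gb (- a))) | a. a \<in> roots C}"
    by (rule gen_subring.gen)
  then have "inverse (xb p) ^ nat (- pr (wprod C ws (fw j)) (snd p)) \<in> gen_subring {inverse (emb (1 - gb (- a))) | a. a \<in> roots C}"
    by (rule gen_pow)
  ultimately show "xb p powi pr (wprod C ws (fw j)) (snd p) \<in> gen_subring {inverse (emb (1 - gb (- a))) | a. a \<in> roots C}"
    by (simp only:)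
qed

lemma chi_family_chi: "chi_family C chi"
  unfolding chi_family_def
proof (intro conjI ballI allI impI)
  fix lam assume "lam \<in> wt_orbits C"
  then obtain ws j where "lam = wprod C ws (fw j)" by (auto simp: wt_orbits_def elim!: weylE)
  then show "chi lam \<in> denom_ring C" using chi_denom by simp
next
  fix i show "chi (fw i) = 1" by (rule chi_fw)
next
  fix w i assume "w \<in> weyl C" "wlen C (w \<circ> srefl C i) = wlen C w + 1"
  then show "chi ((w \<circ> srefl C i) (fw i)) * chi (w (fw i)) =
          inverse (emb (1 - gb (- w (sr C i)))) * (\<Prod>j\<in>UNIV - {i}. chi (w (fw j)) powi - C i j)"
    by (rule REL)
qed

end

context cmc begin

lemma chi_family_nz_eq:
  assumes f1: "chi_family C c1" and f2: "chi_family C c2"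
  shows "\<forall>w. w \<in> weyl C \<longrightarrow> wlen C w = n \<longrightarrow> (\<forall>k. c1 (w (fw k)) = c2 (w (fw k)) \<and> c1 (w (fw k)) \<noteq> 0)"
proof (induction n rule: less_induct)
  case (less n)
  show ?case
  proof (intro allI impI)
    fix w k assume w: "w \<in> weyl C" and wn: "wlen C w = n"
    define lam where "lam = w (fw k)"
    define A where "A = {v. v \<in> weyl C \<and> v (fw k) = lam}"
    have "w \<in> A" using w by (simp add: A_def lam_def)
    then obtain v where vA: "v \<in> A" and vmin: "\<And>v'. v' \<in> A \<Longrightarrow> wlen C v \<le> wlen C v'"
      using ex_has_least_nat[of "\<lambda>v. v \<in> A" w "wlen C"] by blast
    have v: "v \<in> weyl C" "v (fw k) = lam" using vA by (auto simp: A_def)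
    have vn: "wlen C v \<le> n" using vmin[OF \<open>w \<in> A\<close>] wn by simp
    show "c1 (w (fw k)) = c2 (w (fw k)) \<and> c1 (w (fw k)) \<noteq> 0"
    proof (cases "wlen C v = 0")
      case True
      then have "v = id" using wlen0[OF v(1)] by simp
      then have "lam = fw k" using v by simp
      then show ?thesis using f1 f2 by (simp add: lam_def[symmetric] chi_family_def)
    next
      case False
      obtain vs where vs: "length vs = wlen C v" "wprod C vs = v" using wlen_ex[OF v(1)] by blast
      then have "vs \<noteq> []" using False by auto
      then obtain vs' j where vsd: "vs = vs' @ [j]" by (metis append_butlast_last_id)
      define v' where "v' = wprod C vs'"
      have vv': "v = v' \<circ> srefl C j" using vs(2) vsd by (simp add: v'_def)
      have v'len: "wlen C v' < wlen C v" using wlen_le[of vs'] vs(1) vsd by (simp add: v'_def)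
      have jk: "j = k"
      proof (rule ccontr)
        assume "j \<noteq> k"
        then have "v' (fw k) = lam" using v(2) vv' srefl_fw_other[OF \<open>j \<noteq> k\<close>, of C] by simp
        then have "v' \<in> A" by (simp add: A_def v'_def)
        then show False using vmin v'len by fastforce
      qed
      have lenrel: "wlen C (v' \<circ> srefl C k) = wlen C v' + 1"
        using wlen_comp_le[of v' k] v'len vv' jk by (simp add: v'_def)
      have v'w: "v' \<in> weyl C" by (simp add: v'_def)
      have "wlen C v' < n" using v'len vn by simp
      from less.IH[OF this] v'w have IH: "\<forall>j. c1 (v' (fw j)) = c2 (v' (fw j)) \<and> c1 (v' (fw j)) \<noteq> 0"
        by blast
      define R where "R = inverse (emb (1 - gb (- v' (sr C k)))) * (\<Prod>j\<in>UNIV - {k}. c1 (v' (fw j)) powi (- C k j))"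
      have r1: "c1 lam * c1 (v' (fw k)) = R"
        using f1 v'w lenrel unfolding chi_family_def R_def by (simp add: v(2)[symmetric] vv' jk)
      have r2: "c2 lam * c2 (v' (fw k)) = R"
        using f2 v'w lenrel IH unfolding chi_family_def R_def by (simp add: v(2)[symmetric] vv' jk)
      have "(v' (sr C k), cw C vs' (dl k)) \<in> Rp" unfolding v'_def by (rule RpI)
      then have "xb (v' (sr C k), cw C vs' (dl k)) \<noteq> 0" by (rule xb_nz)
      moreover have nz: "\<forall>j. c1 (v' (fw j)) \<noteq> 0" using IH by blast
      ultimately have "R \<noteq> 0" unfolding R_def xb_def
        by (auto simp: prod_zero_iff power_int_not_zero)
      then have "c1 lam \<noteq> 0" using r1 by auto
      moreover have "c1 lam = c2 lam" using r1 r2 IH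
        by (metis mult_right_cancel)
      ultimately show ?thesis by (simp add: lam_def)
    qed
  qed
qed

lemma uniq: "chi_family C c1 \<Longrightarrow> chi_family C c2 \<Longrightarrow> lam \<in> wt_orbits C \<Longrightarrow> c1 lam = c2 lam"
  using chi_family_nz_eq unfolding wt_orbits_def by blast

end

theorem mainTheorem10:
  fixes C :: "'i::{finite,linorder} \<Rightarrow> 'i \<Rightarrow> int"
  assumes "cartan_simple C"
  shows "\<exists>\<chi>. chi_family C \<chi> \<and>
           (\<forall>\<chi>'. chi_family C \<chi>' \<longrightarrow> (\<forall>lam\<in>wt_orbits C. \<chi>' lam = \<chi> lam))"
proof -
  interpret cmc C
  proof
    show "\<And>i. C i i = 2" using cartan_D(1)[OF assms] by blast
    show "cartan_simple C" by (rule assms)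
  qed
  show ?thesis
    using chi_family_chi uniq by blast
qed


end
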